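(* Let $(r,t)\in\{(2,3),(2,4)\}$, $\alpha=2^r-1=3$, $\beta=2^{t-1}-2^{r-1}$ (so $\beta=2$ or $\beta=6$), and let $\mathcal{C}\subseteq\mathbb{Z}_2^\alpha\times\mathbb{Z}_4^\beta$ be a $\mathbb{Z}_2\mathbb{Z}_4$-additive 1-perfect code. Let $\mathcal{C}'\subseteq\mathbb{Z}_2^{\alpha+1}\times\mathbb{Z}_4^\beta$ be obtained from $\mathcal{C}$ by inserting, at a fixed position of the $\mathbb{Z}_2$ part of every codeword $\mathbf{u}$, an extra binary coordinate equal to $w(\mathbf{u})\bmod 2$. Then $\mathcal{C}'$ is not $\mathbb{Z}_2\mathbb{Z}_4$-cyclic.
   Context: A $\mathbb{Z}_2\mathbb{Z}_4$-additive code is an additive subgroup of $\mathbb{Z}_2^\alpha\times\mathbb{Z}_4^\beta$; vectors are $\mathbf{u}=(u\mid u')$ with $u\in\mathbb{Z}_2^\alpha$, $u'\in\mathbb{Z}_4^\beta$. The weight is $w(\mathbf{u})=w_H(u)+w_L(u')$ (Hamming weight plus Lee weight, Lee weights of $0,1,2,3$ being $0,1,2,1$). The Gray map $\phi:\mathbb{Z}_4\to\mathbb{Z}_2^2$ is $0\mapsto(0,0),1\mapsto(0,1),2\mapsto(1,1),3\mapsto(1,0)$, $\Phi(u\mid u')=(u\mid\phi(u'_1),\dots,\phi(u'_\beta))$. A binary code $C\subseteq\mathbb{Z}_2^n$ is 1-perfect if the Hamming balls of radius 1 around its codewords partition $\mathbb{Z}_2^n$; a $\mathbb{Z}_2\mathbb{Z}_4$-additive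 code is 1-perfect if its Gray image is. With $\sigma(v_1,\dots,v_m)=(v_m,v_1,\dots,v_{m-1})$ and $\sigma(u\mid u')=(\sigma(u)\mid\sigma(u'))$, a code is $\mathbb{Z}_2\mathbb{Z}_4$-cyclic if closed under $\sigma$. *)

theory Defs
  imports Main
begin

text \<open>Vectors of Z2^a x Z4^b are pairs of lists of naturals: the binary part has
  length a with entries < 2, the quaternary part length b with entries < 4.\<close>

type_synonym z2z4vec = "nat list \<times> nat list"

definition Z2Z4_space :: "nat \<Rightarrow> nat \<Rightarrow> z2z4vec set" where
  "Z2Z4_space a b = {(u, u'). length u = a \<and> (\<forall>x\<in>set u. x < 2)
                       \<and> length u' = b \<and> (\<forall>x\<in>set u'. x < 4)}"

definition z2z4_add :: "z2z4vec \<Rightarrow> z2z4vec \<Rightarrow> z2z4vec" where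
  "z2z4_add v w = (map2 (\<lambda>x y. (x + y) mod 2) (fst v) (fst w),
                   map2 (\<lambda>x y. (x + y) mod 4) (snd v) (snd w))"

definition z2z4_neg :: "z2z4vec \<Rightarrow> z2z4vec" where
  "z2z4_neg v = (map (\<lambda>x. (2 - x mod 2) mod 2) (fst v), map (\<lambda>x. (4 - x mod 4) mod 4) (snd v))"

definition z2z4_zero :: "nat \<Rightarrow> nat \<Rightarrow> z2z4vec" where
  "z2z4_zero a b = (replicate a 0, replicate b 0)"

definition Z2Z4_additive :: "nat \<Rightarrow> nat \<Rightarrow> z2z4vec set \<Rightarrow> bool" where
  "Z2Z4_additive a b C \<longleftrightarrow> C \<subseteq> Z2Z4_space a b \<and> z2z4_zero a b \<in> C
     \<and> (\<forall>v\<in>C. \<forall>w\<in>C. z2z4_add v w \<in> C) \<and> (\<forall>v\<in>C. z2z4_neg v \<in> C)"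

definition lee_weight :: "nat \<Rightarrow> nat" where
  "lee_weight x = (if x = 0 then 0 else if x = 2 then 2 else 1)"

definition z2z4_weight :: "z2z4vec \<Rightarrow> nat" where
  "z2z4_weight v = length (filter (\<lambda>x. x \<noteq> 0) (fst v)) + sum_list (map lee_weight (snd v))"

fun gray :: "nat \<Rightarrow> nat list" where
  "gray x = (if x = 0 then [0,0] else if x = 1 then [0,1] else if x = 2 then [1,1] else [1,0])"

definition Gray :: "z2z4vec \<Rightarrow> nat list" where
  "Gray v = fst v @ concat (map gray (snd v))"

definition binary_space :: "nat \<Rightarrow> nat list set" where
  "binary_space n = {x. length x = n \<and> (\<forall>y\<in>set x. y < 2)}"

definition hamming_dist :: "nat list \<Rightarrow> nat list \<Rightarrow> nat" where
  "hamming_dist x y = card {i. i < length x \<and> x ! i \<noteq> y ! i}"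

definition one_perfect :: "nat \<Rightarrow> nat list set \<Rightarrow> bool" where
  "one_perfect n C \<longleftrightarrow> C \<subseteq> binary_space n \<and>
     (\<forall>x\<in>binary_space n. \<exists>!c. c \<in> C \<and> hamming_dist x c \<le> 1)"

definition Z2Z4_one_perfect :: "nat \<Rightarrow> nat \<Rightarrow> z2z4vec set \<Rightarrow> bool" where
  "Z2Z4_one_perfect a b C \<longleftrightarrow> one_perfect (a + 2 * b) (Gray ` C)"

definition cshift :: "nat list \<Rightarrow> nat list" where
  "cshift xs = (if xs = [] then [] else last xs # butlast xs)"

definition z2z4_sigma :: "z2z4vec \<Rightarrow> z2z4vec" where
  "z2z4_sigma v = (cshift (fst v), cshift (snd v))"

definition Z2Z4_cyclic :: "z2z4vec set \<Rightarrow> bool" where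
  "Z2Z4_cyclic C \<longleftrightarrow> (\<forall>v\<in>C. z2z4_sigma v \<in> C)"

definition extend_at :: "nat \<Rightarrow> z2z4vec \<Rightarrow> z2z4vec" where
  "extend_at p v = (take p (fst v) @ [z2z4_weight v mod 2] @ drop p (fst v), snd v)"

end

theory Submission
  imports Defs
begin


definition sd :: "nat set \<Rightarrow> nat set \<Rightarrow> nat set" where
  "sd A B = (A - B) \<union> (B - A)"

lemma block:
  assumes sub: "\<And>A. A\<in>S \<Longrightarrow> A \<subseteq> {..<N}"
  and emp: "{} \<in> S"
  and dist: "\<And>A B. A\<in>S \<Longrightarrow> B\<in>S \<Longrightarrow> A\<noteq>B \<Longrightarrow> 3 \<le> card (sd A B)"
  and even: "\<And>A. A\<in>S \<Longrightarrow> even (card A)"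
  and cover: "\<And>Y. Y \<subseteq> {..<N} \<Longrightarrow> odd (card Y) \<Longrightarrow> \<exists>A\<in>S. card (sd Y A) \<le> 1"
  and Y: "Y \<subseteq> {..<N}" "card Y = 3"
  shows "\<exists>k<N. k \<notin> Y \<and> insert k Y \<in> S"
proof -
  have "odd (card Y)" using Y(2) by simp
  then obtain A where A: "A \<in> S" "card (sd Y A) \<le> 1" using cover[OF Y(1)] by blast
  have fY: "finite Y" using Y(1) finite_subset by blast
  have fA: "finite A" using sub[OF A(1)] finite_subset by blast
  have "sd Y {} = Y" by (simp add: sd_def)
  hence "A \<noteq> {}" using A(2) Y(2) by auto
  hence "3 \<le> card (sd A {})" using dist[OF A(1) emp] by blast
  hence c3: "3 \<le> card A" by (simp add: sd_def)
  have ev: "even (card A)" using even[OF A(1)] .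
  have fin: "finite (sd Y A)" using fY fA by (simp add: sd_def)
  show ?thesis
  proof (cases "sd Y A = {}")
    case True
    hence "A = Y" unfolding sd_def by blast
    thus ?thesis using ev Y(2) by simp
  next
    case False
    hence "card (sd Y A) = 1" using A(2) fin by (simp add: le_Suc_eq)
    then obtain k where k: "sd Y A = {k}" using card_1_singletonE by blast
    show ?thesis
    proof (cases "k \<in> Y")
      case True
      hence "A = Y - {k}" using k unfolding sd_def by blast
      hence "card A = 2" using True Y(2) fY by simp
      thus ?thesis using c3 by simp
    next
      case False
      have Ak: "A = insert k Y"
      proof (rule set_eqI)
        fix x
        have "x \<in> sd Y A \<longleftrightarrow> x = k" using k by simp
        thus "x \<in> A \<longleftrightarrow> x \<in> insert k Y" using False unfolding sd_def by auto
      qed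
      have "k < N" using sub[OF A(1)] Ak by auto
      thus ?thesis using False A(1) Ak by auto
    qed
  qed
qed


definition pi :: "nat \<Rightarrow> nat \<Rightarrow> nat" where
  "pi b k = (if k < 4 then (k+1) mod 4 else 4 + 2*(((k-4) div 2 + 1) mod b) + (k-4) mod 2)"

definition rho :: "nat \<Rightarrow> nat" where
  "rho k = (if k < 4 then (k+2) mod 4 else k)"
lemma rho_odd: "A0 \<subseteq> {0,1,2,3} \<Longrightarrow> odd (card A0) \<Longrightarrow> card (sd A0 (rho ` A0)) = 2"
proof -
  assume a: "A0 \<subseteq> {0,1,2,3}" "odd (card A0)"
  hence "A0 \<in> Pow {0,1,2,3}" by simp
  hence "A0 = {0, 1, 2, 3} \<or> A0 = {0, 1, 2} \<or> A0 = {0, 1, 3} \<or> A0 = {0, 1} \<or> A0 = {0, 2, 3} \<or>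
     A0 = {0, 2} \<or> A0 = {0, 3} \<or> A0 = {0} \<or> A0 = {1, 2, 3} \<or> A0 = {1, 2} \<or> A0 = {1, 3} \<or>
     A0 = {1} \<or> A0 = {2, 3} \<or> A0 = {2} \<or> A0 = {3} \<or> A0 = {}" by (simp add: Pow_insert)
  thus ?thesis using a(2) by (elim disjE) (simp_all add: rho_def sd_def insert_Diff_if)
qed

lemma qeven:
  assumes sub: "A \<subseteq> {..<N}"
  and f: "\<And>k. k<N \<Longrightarrow> f k = rho k"
  and d: "f ` A = A \<or> 3 \<le> card (sd A (f ` A))"
  shows "even (card (A \<inter> {0,1,2,3}))"
proof (rule ccontr)
  assume o: "odd (card (A \<inter> {0,1,2,3}))"
  define A0 where "A0 = A \<inter> {0,1,2,3}"
  have fA: "f ` A = rho ` A" using sub f by (auto intro!: image_cong)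
  have "rho ` A = rho ` A0 \<union> (A - {0,1,2,3})"
    unfolding A0_def rho_def by (auto simp: image_iff)
  moreover have "rho ` A0 \<subseteq> {0,1,2,3}" unfolding A0_def rho_def by auto
  ultimately have e: "sd A (rho ` A) = sd A0 (rho ` A0)" unfolding sd_def A0_def by auto
  have c2: "card (sd A0 (rho ` A0)) = 2" using rho_odd o unfolding A0_def by auto
  hence "sd A (rho ` A) \<noteq> {}" using e by auto
  hence "rho ` A \<noteq> A" unfolding sd_def by auto
  thus False using d fA e c2 by simp
qed

lemma no2:
  assumes dist: "\<And>A B. A\<in>S \<Longrightarrow> B\<in>S \<Longrightarrow> A\<noteq>B \<Longrightarrow> 3 \<le> card (sd A B)"
  and "A \<in> S" "B \<in> S" "card (sd A B) = 2"
  shows False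
proof -
  have "A \<noteq> B" using assms(4) by (auto simp: sd_def)
  thus False using dist assms by fastforce
qed

lemma lt16: "(k::nat) < 16 \<Longrightarrow> k=0 \<or> k=1 \<or> k=2 \<or> k=3 \<or> k=4 \<or> k=5 \<or> k=6 \<or> k=7 \<or> k=8 \<or> k=9 \<or> k=10 \<or> k=11 \<or> k=12 \<or> k=13 \<or> k=14 \<or> k=15"
  by arith

lemma lt8: "(k::nat) < 8 \<Longrightarrow> k=0 \<or> k=1 \<or> k=2 \<or> k=3 \<or> k=4 \<or> k=5 \<or> k=6 \<or> k=7"
  by arith

lemma final6:
  assumes sub: "\<And>A. A\<in>S \<Longrightarrow> A \<subseteq> {..<16}"
  and emp: "{} \<in> S"
  and dist: "\<And>A B. A\<in>S \<Longrightarrow> B\<in>S \<Longrightarrow> A\<noteq>B \<Longrightarrow> 3 \<le> card (sd A B)"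
  and even: "\<And>A. A\<in>S \<Longrightarrow> even (card A)"
  and cover: "\<And>Y. Y \<subseteq> {..<16} \<Longrightarrow> odd (card Y) \<Longrightarrow> \<exists>A\<in>S. card (sd Y A) \<le> 1"
  and rot: "\<And>A. A\<in>S \<Longrightarrow> pi 6 ` A \<in> S"
  shows False
proof -
  define f where "f = (\<lambda>k. pi 6 (pi 6 (pi 6 (pi 6 (pi 6 (pi 6 k))))))"
  have frho: "\<And>k. k<16 \<Longrightarrow> f k = rho k"
  proof -
    fix k :: nat assume "k < 16"
    from lt16[OF this] show "f k = rho k" unfolding f_def
      by (elim disjE) (simp_all add: pi_def rho_def)
  qed
  have qe: "even (card (A \<inter> {0,1,2,3}))" if A: "A \<in> S" for A
  proof (rule qeven[OF sub[OF A] frho])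
    have "f ` A \<in> S" unfolding f_def using rot[OF rot[OF rot[OF rot[OF rot[OF rot[OF A]]]]]]
      by (simp add: image_image)
    thus "f ` A = A \<or> 3 \<le> card (sd A (f ` A))" using dist[OF A] by blast
  qed
  have blk: "\<exists>k. k \<in> {1,2,3} \<and> insert k {0,4,q} \<in> S" if q: "q \<in> {5,6,7,8}" for q
  proof -
    have "{0,4,q} \<subseteq> {..<16}" "card {0,4,q} = 3" using q by auto
    from block[OF sub emp dist even cover this] obtain k where
      k: "k < 16" "k \<notin> {0,4,q}" "insert k {0,4,q} \<in> S" by blast
    have "k < 4"
    proof (rule ccontr)
      assume "\<not> k < 4"
      hence "insert k {0,4,q} \<inter> {0,1,2,3} = {0}" using q by auto
      hence "even (card {0::nat})" using qe[OF k(3)] by metis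
      thus False by simp
    qed
    hence "k \<in> {1,2,3}" using k(2) by auto
    thus ?thesis using k(3) by blast
  qed
  have dk: "k1 \<noteq> k2" if "k1 \<in> {1,2,3}" "insert k1 {0,4,q1} \<in> S" "q1 \<in> {5,6,7,8}"
    "k2 \<in> {1,2,3}" "insert k2 {0,4,q2} \<in> S" "q2 \<in> {5,6,7,8}" "q1 \<noteq> q2" for k1 k2 q1 q2
  proof
    assume e: "k1 = k2"
    have i1: "insert k1 {0,4,q1} = insert q1 {k1,0,4}" "insert k2 {0,4,q2} = insert q2 {k1,0,4}"
      using e by auto
    have "q1 \<notin> {k1,0,4}" "q2 \<notin> {k1,0,4}" using that(1,3,6) by auto
    hence "sd (insert q1 {k1,0,4}) (insert q2 {k1,0,4}) = {q1,q2}" using that(7) unfolding sd_def by blast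
    hence "card (sd (insert k1 {0,4,q1}) (insert k2 {0,4,q2})) = 2" using that(7) i1 by simp
    thus False using no2[OF dist] that by blast
  qed
  obtain k5 where k5: "k5 \<in> {1,2,3}" "insert k5 {0,4,5} \<in> S" using blk[of 5] by auto
  obtain k6 where k6: "k6 \<in> {1,2,3}" "insert k6 {0,4,6} \<in> S" using blk[of 6] by auto
  obtain k7 where k7: "k7 \<in> {1,2,3}" "insert k7 {0,4,7} \<in> S" using blk[of 7] by auto
  obtain k8 where k8: "k8 \<in> {1,2,3}" "insert k8 {0,4,8} \<in> S" using blk[of 8] by auto
  have "k5 \<noteq> k6" by (rule dk[OF k5 _ k6]) auto
  moreover have "k5 \<noteq> k7" by (rule dk[OF k5 _ k7]) auto
  moreover have "k5 \<noteq> k8" by (rule dk[OF k5 _ k8]) auto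
  moreover have "k6 \<noteq> k7" by (rule dk[OF k6 _ k7]) auto
  moreover have "k6 \<noteq> k8" by (rule dk[OF k6 _ k8]) auto
  moreover have "k7 \<noteq> k8" by (rule dk[OF k7 _ k8]) auto
  ultimately show False using k5(1) k6(1) k7(1) k8(1) by auto
qed


lemma final2:
  assumes sub: "\<And>A. A\<in>S \<Longrightarrow> A \<subseteq> {..<8}"
  and emp: "{} \<in> S"
  and dist: "\<And>A B. A\<in>S \<Longrightarrow> B\<in>S \<Longrightarrow> A\<noteq>B \<Longrightarrow> 3 \<le> card (sd A B)"
  and even: "\<And>A. A\<in>S \<Longrightarrow> even (card A)"
  and cover: "\<And>Y. Y \<subseteq> {..<8} \<Longrightarrow> odd (card Y) \<Longrightarrow> \<exists>A\<in>S. card (sd Y A) \<le> 1"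
  and rot: "\<And>A. A\<in>S \<Longrightarrow> pi 2 ` A \<in> S"
  shows False
proof -
  define f where "f = (\<lambda>k. pi 2 (pi 2 (pi 2 (pi 2 (pi 2 (pi 2 k))))))"
  have frho: "\<And>k. k<8 \<Longrightarrow> f k = rho k"
  proof -
    fix k :: nat assume "k < 8"
    from lt8[OF this] show "f k = rho k" unfolding f_def
      by (elim disjE) (simp_all add: pi_def rho_def)
  qed
  have qe: "even (card (A \<inter> {0,1,2,3}))" if A: "A \<in> S" for A
  proof (rule qeven[OF sub[OF A] frho])
    have "f ` A \<in> S" unfolding f_def using rot[OF rot[OF rot[OF rot[OF rot[OF rot[OF A]]]]]]
      by (simp add: image_image)
    thus "f ` A = A \<or> 3 \<le> card (sd A (f ` A))" using dist[OF A] by blast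
  qed
  have blk: "\<exists>k. k \<in> {1,2,3} \<and> insert k {0,a,b} \<in> S" if q: "a \<in> {4,5,6,7}" "b \<in> {4,5,6,7}" "a \<noteq> b" for a b
  proof -
    have "{0,a,b} \<subseteq> {..<8}" "card {0,a,b} = 3" using q by auto
    from block[OF sub emp dist even cover this] obtain k where
      k: "k < 8" "k \<notin> {0,a,b}" "insert k {0,a,b} \<in> S" by blast
    have "k < 4"
    proof (rule ccontr)
      assume "\<not> k < 4"
      hence "insert k {0,a,b} \<inter> {0,1,2,3} = {0}" using q by auto
      hence "even (card {0::nat})" using qe[OF k(3)] by metis
      thus False by simp
    qed
    hence "k \<in> {1,2,3}" using k(2) by auto
    thus ?thesis using k(3) by blast
  qed
  have n2: "\<And>A B. A \<in> S \<Longrightarrow> B \<in> S \<Longrightarrow> card (sd A B) = 2 \<Longrightarrow> False"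
    using no2[OF dist] by blast
  obtain j where j: "j \<in> {1,2,3}" "insert j {0,4,6} \<in> S" using blk[of 4 6] by auto
  have j2: "j = 2"
  proof (rule ccontr)
    assume "j \<noteq> 2"
    hence "j = 1 \<or> j = 3" using j(1) by auto
    thus False
    proof
      assume "j = 1"
      hence A: "{1,0,4,6} \<in> S" using j(2) by simp
      have "card (sd {1,0,4,6} (pi 2 ` {1,0,4,6})) = 2" by (simp add: pi_def sd_def insert_Diff_if)
      thus False using n2[OF A rot[OF A]] by blast
    next
      assume "j = 3"
      hence A: "{3,0,4,6} \<in> S" using j(2) by simp
      have "card (sd {3,0,4,6} (pi 2 ` {3,0,4,6})) = 2" by (simp add: pi_def sd_def insert_Diff_if)
      thus False using n2[OF A rot[OF A]] by blast
    qed
  qed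
  have A1: "{2,0,4,6} \<in> S" using j j2 by simp
  obtain j' where j': "j' \<in> {1,2,3}" "insert j' {0,4,7} \<in> S" using blk[of 4 7] by auto
  obtain m where m: "m \<in> {1,2,3}" "insert m {0,4,5} \<in> S" using blk[of 4 5] by auto
  have "j' \<noteq> 2"
  proof
    assume "j' = 2"
    hence A: "{2,0,4,7} \<in> S" using j'(2) by simp
    have "card (sd {2,0,4,7} {2,0,4,6}) = 2" by (simp add: sd_def insert_Diff_if)
    thus False using n2[OF A A1] by blast
  qed
  have "m \<noteq> 2"
  proof
    assume "m = 2"
    hence A: "{2,0,4,5} \<in> S" using m(2) by simp
    have "card (sd {2,0,4,5} {2,0,4,6}) = 2" by (simp add: sd_def insert_Diff_if)
    thus False using n2[OF A A1] by blast
  qed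
  have "m \<noteq> j'"
  proof
    assume e: "m = j'"
    have "card (sd (insert m {0,4,5}) (insert j' {0,4,7})) = 2" using e m(1)
      by (auto simp: sd_def insert_Diff_if)
    thus False using n2[OF m(2) j'(2)] by blast
  qed
  hence "(j' = 1 \<and> m = 3) \<or> (j' = 3 \<and> m = 1)" using \<open>j' \<noteq> 2\<close> \<open>m \<noteq> 2\<close> j'(1) m(1) by auto
  thus False
  proof
    assume "j' = 1 \<and> m = 3"
    hence A: "{1,0,4,7} \<in> S" and B: "{3,0,4,5} \<in> S" using j'(2) m(2) by simp_all
    have "card (sd (pi 2 ` pi 2 ` pi 2 ` {1,0,4,7}) {3,0,4,5}) = 2" by (simp add: pi_def sd_def insert_Diff_if)
    thus False using n2[OF rot[OF rot[OF rot[OF A]]] B] by blast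
  next
    assume "j' = 3 \<and> m = 1"
    hence A: "{3,0,4,7} \<in> S" and B: "{1,0,4,5} \<in> S" using j'(2) m(2) by simp_all
    have "card (sd (pi 2 ` {3,0,4,7}) {1,0,4,5}) = 2" by (simp add: pi_def sd_def insert_Diff_if)
    thus False using n2[OF rot[OF A] B] by blast
  qed
qed



definition supp :: "nat list \<Rightarrow> nat set" where
  "supp g = {i. i < length g \<and> g ! i \<noteq> 0}"

definition ins :: "nat \<Rightarrow> nat list \<Rightarrow> nat list" where
  "ins p g = take p g @ [card (supp g) mod 2] @ drop p g"

lemma card_supp: "card (supp g) = length (filter (\<lambda>x. x \<noteq> 0) g)"
  unfolding supp_def by (simp add: length_filter_conv_card)

lemma supp_mem: "j \<in> supp g \<longleftrightarrow> j < length g \<and> g ! j \<noteq> 0" by (simp add: supp_def)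

lemma supp_sub: "supp g \<subseteq> {..<length g}" unfolding supp_def by auto

lemma gray_w: "x < 4 \<Longrightarrow> length (filter (\<lambda>x. x \<noteq> 0) (gray x)) = lee_weight x"
  by (cases x; cases "x - 1"; cases "x - 2"; auto simp: lee_weight_def)

lemma gray_len: "length (gray x) = 2" by simp

lemma concat_w: "\<forall>x\<in>set u. x < 4 \<Longrightarrow>
  length (filter (\<lambda>x. x \<noteq> 0) (concat (map gray u))) = sum_list (map lee_weight u)"
proof (induction u)
  case Nil thus ?case by simp
next
  case (Cons a u)
  have "length (filter (\<lambda>x. x \<noteq> 0) (gray a)) = lee_weight a" using Cons.prems by (intro gray_w) simp
  thus ?case using Cons by (simp del: gray.simps)
qed

lemma weight_Gray: "c \<in> Z2Z4_space a b \<Longrightarrow> z2z4_weight c = card (supp (Gray c))"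
proof -
  assume a: "c \<in> Z2Z4_space a b"
  obtain u u' where c: "c = (u, u')" by force
  have "\<forall>x\<in>set u'. x < 4" using a c unfolding Z2Z4_space_def by auto
  from concat_w[OF this] show ?thesis
    unfolding card_supp Gray_def z2z4_weight_def c by (simp del: gray.simps)
qed

lemma len_concat_gray: "length (concat (map gray u)) = 2 * length u"
  by (induction u) (simp_all del: gray.simps add: gray_len)

lemma len_Gray: "c \<in> Z2Z4_space a b \<Longrightarrow> length (Gray c) = a + 2 * b"
  unfolding Gray_def Z2Z4_space_def by (auto simp del: gray.simps simp: len_concat_gray)

lemma ext_Gray: "c \<in> Z2Z4_space 3 b \<Longrightarrow> p \<le> 3 \<Longrightarrow> Gray (extend_at p c) = ins p (Gray c)"
  unfolding extend_at_def ins_def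
  apply (subst weight_Gray[symmetric], assumption)
  unfolding Gray_def Z2Z4_space_def by auto

lemma ext_space: "c \<in> Z2Z4_space 3 b \<Longrightarrow> extend_at p c \<in> Z2Z4_space 4 b"
  unfolding extend_at_def Z2Z4_space_def
  by (auto dest: in_set_takeD in_set_dropD)

lemma hd_supp:
  assumes "g \<in> binary_space n" "h \<in> binary_space n"
  shows "hamming_dist g h = card (sd (supp g) (supp h))"
proof -
  have "{i. i < length g \<and> g ! i \<noteq> h ! i} = sd (supp g) (supp h)"
  proof (rule set_eqI)
    fix i
    show "i \<in> {i. i < length g \<and> g ! i \<noteq> h ! i} \<longleftrightarrow> i \<in> sd (supp g) (supp h)"
    proof (cases "i < n")
      case True
      hence "g ! i \<in> set g" "h ! i \<in> set h" using assms unfolding binary_space_def by auto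
      hence "g ! i < 2" "h ! i < 2" using assms unfolding binary_space_def by auto
      hence "g ! i \<noteq> h ! i \<longleftrightarrow> (g ! i \<noteq> 0) \<noteq> (h ! i \<noteq> 0)" by arith
      thus ?thesis using True assms unfolding binary_space_def supp_def sd_def by auto
    next
      case False thus ?thesis using assms unfolding binary_space_def supp_def sd_def by auto
    qed
  qed
  thus ?thesis unfolding hamming_dist_def by simp
qed


definition vec :: "nat \<Rightarrow> nat set \<Rightarrow> nat list" where
  "vec n X = map (\<lambda>i. if i \<in> X then 1 else 0) [0..<n]"

lemma vec_bin: "vec n X \<in> binary_space n"
  unfolding vec_def binary_space_def by auto

lemma supp_vec: "supp (vec n X) = X \<inter> {..<n}"
  unfolding vec_def supp_def by (auto split: if_splits)

lemma bin_nth: "g \<in> binary_space n \<Longrightarrow> i < n \<Longrightarrow> g ! i < 2"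
  unfolding binary_space_def by auto

lemma supp_eq:
  assumes "g \<in> binary_space n" "h \<in> binary_space n" "supp g = supp h"
  shows "g = h"
proof -
  have L: "length g = length h" using assms unfolding binary_space_def by auto
  show ?thesis
  proof (rule nth_equalityI[OF L])
  fix i assume i: "i < length g"
  hence "i < n" using assms unfolding binary_space_def by auto
  hence "g ! i < 2" "h ! i < 2" using bin_nth assms by auto
  moreover have "(g ! i \<noteq> 0) = (h ! i \<noteq> 0)"
  proof -
    have "i \<in> supp g \<longleftrightarrow> i \<in> supp h" using assms(3) by simp
    thus ?thesis using i L unfolding supp_def by simp
  qed
  ultimately show "g ! i = h ! i" by arith
  qed
qed

lemma perf_sub: "one_perfect n G \<Longrightarrow> g \<in> G \<Longrightarrow> g \<in> binary_space n"
  unfolding one_perfect_def by auto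

lemma supp_bin: "g \<in> binary_space n \<Longrightarrow> supp g \<subseteq> {..<n}"
  unfolding supp_def binary_space_def by auto

lemma perf_cover:
  assumes P: "one_perfect n G" and X: "X \<subseteq> {..<n}"
  shows "\<exists>g\<in>G. card (sd X (supp g)) \<le> 1"
proof -
  obtain g where g: "g \<in> G" "hamming_dist (vec n X) g \<le> 1"
    using P vec_bin[of n X] unfolding one_perfect_def by blast
  have "hamming_dist (vec n X) g = card (sd X (supp g))"
    using hd_supp[OF vec_bin perf_sub[OF P g(1)]] supp_vec[of n X] X by (simp add: Int_absorb2)
  thus ?thesis using g by auto
qed

lemma perf_dist:
  assumes P: "one_perfect n G" and g: "g \<in> G" and h: "h \<in> G" and ne: "g \<noteq> h"
  shows "3 \<le> card (sd (supp g) (supp h))"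
proof (rule ccontr)
  assume "\<not> 3 \<le> card (sd (supp g) (supp h))"
  hence c2: "card (sd (supp g) (supp h)) \<le> 2" by simp
  have gb: "g \<in> binary_space n" and hb: "h \<in> binary_space n" using perf_sub P g h by auto
  have "supp g \<noteq> supp h" using supp_eq[OF gb hb] ne by blast
  hence "sd (supp g) (supp h) \<noteq> {}" unfolding sd_def by blast
  then obtain i where i: "i \<in> sd (supp g) (supp h)" by blast
  have subD: "sd (supp g) (supp h) \<subseteq> {..<n}" using supp_bin[OF gb] supp_bin[OF hb] unfolding sd_def by blast
  have fD: "finite (sd (supp g) (supp h))" using subD finite_subset by blast
  define X where "X = sd (supp g) {i}"
  have X: "X \<subseteq> {..<n}" using supp_bin[OF gb] i subD unfolding X_def sd_def by blast
  have e1: "sd X (supp g) = {i}" unfolding X_def sd_def by blast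
  have e2: "sd X (supp h) = sd (supp g) (supp h) - {i}" using i unfolding X_def sd_def by blast
  have dg: "hamming_dist (vec n X) g \<le> 1"
    using hd_supp[OF vec_bin gb] supp_vec[of n X] X e1 by (simp add: Int_absorb2)
  have "card (sd (supp g) (supp h) - {i}) \<le> 1" using c2 i fD by simp
  hence dh: "hamming_dist (vec n X) h \<le> 1"
    using hd_supp[OF vec_bin hb] supp_vec[of n X] X e2 by (simp add: Int_absorb2)
  have "\<exists>!c. c \<in> G \<and> hamming_dist (vec n X) c \<le> 1" using P vec_bin unfolding one_perfect_def by blast
  then obtain c where c: "\<And>y. y \<in> G \<and> hamming_dist (vec n X) y \<le> 1 \<Longrightarrow> y = c"
    by (elim ex1E) blast
  have "g = c" by (rule c) (use g dg in simp)
  moreover have "h = c" by (rule c) (use h dh in simp)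
  ultimately have "g = h" by simp
  thus False using ne by simp
qed


definition sh :: "nat \<Rightarrow> nat \<Rightarrow> nat" where
  "sh p i = (if i < p then i else Suc i)"

lemma sh_inj: "inj (sh p)"
  unfolding sh_def inj_def by auto

lemma sh_ne: "sh p i \<noteq> p"
  unfolding sh_def by auto

lemma sh_eq_iff[simp]: "sh p a = sh p b \<longleftrightarrow> a = b"
  using sh_inj by (simp add: inj_eq)

lemma sh_ne1[simp]: "sh p i = p \<longleftrightarrow> False" and sh_ne2[simp]: "p = sh p i \<longleftrightarrow> False"
  unfolding sh_def by auto

lemma len_ins: "p \<le> length g \<Longrightarrow> length (ins p g) = Suc (length g)"
  unfolding ins_def by simp

lemma ins_nth: "p \<le> length g \<Longrightarrow> ins p g ! j = (if j < p then g ! j else if j = p then card (supp g) mod 2 else g ! (j - 1))"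
  unfolding ins_def
  by (auto simp: nth_append min_def nth_Cons' dest: not_less_eq[THEN iffD1])

lemma supp_ins:
  assumes p: "p \<le> length g"
  shows "supp (ins p g) = sh p ` supp g \<union> (if odd (card (supp g)) then {p} else {})"
proof (rule set_eqI)
  fix j
  show "j \<in> supp (ins p g) \<longleftrightarrow> j \<in> sh p ` supp g \<union> (if odd (card (supp g)) then {p} else {})"
  proof (cases "j < p")
    case True
    hence "j \<in> sh p ` supp g \<longleftrightarrow> j \<in> supp g"
      unfolding sh_def image_iff by (metis Suc_lessD less_irrefl_nat not_less_eq)
    thus ?thesis using True p unfolding supp_def[of "ins p g"] by (simp add: len_ins ins_nth supp_mem)
  next
    case False
    show ?thesis
    proof (cases "j = p")
      case True
      have "j \<notin> sh p ` supp g" using True sh_ne by (metis imageE)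
      thus ?thesis using True p unfolding supp_def[of "ins p g"] by (simp add: len_ins ins_nth odd_iff_mod_2_eq_one)
    next
      case F2: False
      then obtain i where i: "j = Suc i" "p \<le> i" using False by (metis less_Suc_eq_0_disj not_less_eq Suc_leI le_eq_less_or_eq not_less)
      have "j \<in> sh p ` supp g \<longleftrightarrow> i \<in> supp g"
        using i unfolding sh_def image_iff by (metis Suc_inject Suc_lessD less_not_refl2 not_less)
      thus ?thesis using i p F2 unfolding supp_def[of "ins p g"] by (auto simp: len_ins ins_nth supp_mem)
    qed
  qed
qed


lemma card_sd: "finite A \<Longrightarrow> finite B \<Longrightarrow> card (sd A B) + 2 * card (A \<inter> B) = card A + card B"
proof -
  assume f: "finite A" "finite B"
  have "card (sd A B) = card (A - B) + card (B - A)" unfolding sd_def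
    by (rule card_Un_disjoint) (use f in auto)
  moreover have "card A = card (A - B) + card (A \<inter> B)"
  proof -
    have "A = (A - B) \<union> (A \<inter> B)" by blast
    hence "card A = card ((A - B) \<union> (A \<inter> B))" by simp
    also have "\<dots> = card (A - B) + card (A \<inter> B)" by (rule card_Un_disjoint) (use f in auto)
    finally show ?thesis .
  qed
  moreover have "card B = card (B - A) + card (A \<inter> B)"
  proof -
    have "B = (B - A) \<union> (A \<inter> B)" by blast
    hence "card B = card ((B - A) \<union> (A \<inter> B))" by simp
    also have "\<dots> = card (B - A) + card (A \<inter> B)" by (rule card_Un_disjoint) (use f in auto)
    finally show ?thesis .
  qed
  ultimately show ?thesis by simp
qed


lemma fin_supp: "finite (supp g)" using supp_sub finite_subset by blast

lemma card_sh: "card (sh p ` X) = card X"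
  by (rule card_image) (meson sh_inj inj_on_subset subset_UNIV)

lemma p_notin_sh: "p \<notin> sh p ` X" using sh_ne by (metis imageE)

lemma card_insP: "p \<le> length g \<Longrightarrow> card (supp (ins p g)) = card (supp g) + (if odd (card (supp g)) then 1 else 0)"
proof -
  assume p: "p \<le> length g"
  have "card (sh p ` supp g \<union> (if odd (card (supp g)) then {p} else {}))
     = card (sh p ` supp g) + card (if odd (card (supp g)) then {p} else {})"
    by (rule card_Un_disjoint) (use fin_supp p_notin_sh in auto)
  thus ?thesis using supp_ins[OF p] card_sh by simp
qed

lemma even_ins: "p \<le> length g \<Longrightarrow> even (card (supp (ins p g)))"
  using card_insP by simp

lemma dist_ins:
  assumes "p \<le> length g" "p \<le> length h"
  shows "card (sd (supp g) (supp h)) \<le> card (sd (supp (ins p g)) (supp (ins p h)))"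
proof -
  have sub: "sh p ` sd (supp g) (supp h) \<subseteq> sd (supp (ins p g)) (supp (ins p h))"
    unfolding supp_ins[OF assms(1)] supp_ins[OF assms(2)] sd_def
    using inj_image_mem_iff[OF sh_inj] sh_ne by auto
  have "finite (sd (supp (ins p g)) (supp (ins p h)))" using fin_supp unfolding sd_def by auto
  from card_mono[OF this sub] show ?thesis using card_sh by simp
qed


lemma sd_decomp: "Yp \<subseteq> {p} \<Longrightarrow> P \<subseteq> {p} \<Longrightarrow>
  sd (sh p ` X \<union> Yp) (sh p ` S \<union> P) = sh p ` sd X S \<union> sd Yp P"
  unfolding sd_def by auto

lemma cover_ins:
  assumes P: "one_perfect n G" and p: "p \<le> n" and Y: "Y \<subseteq> {..<Suc n}" "odd (card Y)"
  shows "\<exists>g\<in>G. card (sd Y (supp (ins p g))) \<le> 1"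
proof -
  define X where "X = {i. i < n \<and> sh p i \<in> Y}"
  have X: "X \<subseteq> {..<n}" unfolding X_def by auto
  obtain g where g: "g \<in> G" "card (sd X (supp g)) \<le> 1" using perf_cover[OF P X] by blast
  have lg: "length g = n" using perf_sub[OF P g(1)] unfolding binary_space_def by simp
  define Sg where "Sg = supp g"
  define Pg where "Pg = (if odd (card Sg) then {p} else ({}::nat set))"
  have A: "supp (ins p g) = sh p ` Sg \<union> Pg" using supp_ins[of p g] p lg unfolding Sg_def Pg_def by simp
  have Ydec: "Y = sh p ` X \<union> (Y \<inter> {p})"
  proof
    show "sh p ` X \<union> (Y \<inter> {p}) \<subseteq> Y" unfolding X_def by auto
  next
    show "Y \<subseteq> sh p ` X \<union> (Y \<inter> {p})"
    proof
      fix y assume y: "y \<in> Y"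
      show "y \<in> sh p ` X \<union> (Y \<inter> {p})"
      proof (cases "y = p")
        case True thus ?thesis using y by simp
      next
        case False
        have yn: "y < Suc n" using y Y(1) by auto
        show ?thesis
        proof (cases "y < p")
          case True
          hence "sh p y = y" "y < n" using p unfolding sh_def by auto
          thus ?thesis using y unfolding X_def by (metis (mono_tags, lifting) UnI1 image_eqI mem_Collect_eq)
        next
          case F2: False
          hence "sh p (y - 1) = y" "y - 1 < n" using False yn unfolding sh_def by auto
          thus ?thesis using y unfolding X_def by (metis (mono_tags, lifting) UnI1 image_eqI mem_Collect_eq)
        qed
      qed
    qed
  qed
  have fX: "finite X" using X finite_subset by blast
  have fS: "finite Sg" unfolding Sg_def by (rule fin_supp)
  have "sd Y (supp (ins p g)) = sd (sh p ` X \<union> (Y \<inter> {p})) (sh p ` Sg \<union> Pg)"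
    unfolding A by (rule arg_cong[OF Ydec])
  also have "\<dots> = sh p ` sd X Sg \<union> sd (Y \<inter> {p}) Pg"
    by (rule sd_decomp) (auto simp: Pg_def)
  finally have sdY: "sd Y (supp (ins p g)) = sh p ` sd X Sg \<union> sd (Y \<inter> {p}) Pg" .
  have fsd: "finite (sd X Sg)" unfolding sd_def by (simp add: fX fS)
  have sdp: "sd (Y \<inter> {p}) Pg \<subseteq> {p}" unfolding sd_def Pg_def by auto
  have fsdp: "finite (sd (Y \<inter> {p}) Pg)" by (rule finite_subset[OF sdp]) simp
  have dj: "sh p ` sd X Sg \<inter> sd (Y \<inter> {p}) Pg = {}" using sdp p_notin_sh[of p "sd X Sg"] by auto
  have "card (sh p ` sd X Sg \<union> sd (Y \<inter> {p}) Pg) = card (sh p ` sd X Sg) + card (sd (Y \<inter> {p}) Pg)"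
    using card_Un_disjoint[OF finite_imageI[OF fsd] fsdp dj] .
  hence c1: "card (sd Y (supp (ins p g))) = card (sd X Sg) + card (sd (Y \<inter> {p}) Pg)"
    unfolding sdY card_sh .
  have dj2: "sh p ` X \<inter> (Y \<inter> {p}) = {}" using p_notin_sh[of p X] by auto
  have "card (sh p ` X \<union> (Y \<inter> {p})) = card (sh p ` X) + card (Y \<inter> {p})"
    using card_Un_disjoint[OF finite_imageI[OF fX] _ dj2] by simp
  moreover have "card Y = card (sh p ` X \<union> (Y \<inter> {p}))" by (rule arg_cong[OF Ydec])
  ultimately have c2: "card Y = card X + card (Y \<inter> {p})" using card_sh by simp
  have c3: "card (sd X Sg) + 2 * card (X \<inter> Sg) = card X + card Sg" using card_sd fX fS by blast
  have s1: "card (sd X Sg) \<le> 1" using g(2) unfolding Sg_def .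
  show ?thesis
  proof (cases "p \<in> Y")
    case True
    hence cY: "card (Y \<inter> {p}) = 1" by simp
    show ?thesis
    proof (cases "odd (card Sg)")
      case True
      hence "sd (Y \<inter> {p}) Pg = {}" using \<open>p \<in> Y\<close> unfolding Pg_def sd_def by auto
      hence "card (sd Y (supp (ins p g))) \<le> 1" using c1 s1 by simp
      thus ?thesis using g(1) by blast
    next
      case False
      hence "sd (Y \<inter> {p}) Pg = {p}" using \<open>p \<in> Y\<close> unfolding Pg_def sd_def by auto
      moreover have "card (sd X Sg) = 0" using c2 c3 cY Y(2) False s1 by presburger
      ultimately have "card (sd Y (supp (ins p g))) \<le> 1" using c1 by simp
      thus ?thesis using g(1) by blast
    qed
  next
    case False
    hence cY: "card (Y \<inter> {p}) = 0" by simp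
    show ?thesis
    proof (cases "odd (card Sg)")
      case True
      hence "sd (Y \<inter> {p}) Pg = {p}" using \<open>p \<notin> Y\<close> unfolding Pg_def sd_def by auto
      moreover have "card (sd X Sg) = 0" using c2 c3 cY Y(2) True s1 by presburger
      ultimately have "card (sd Y (supp (ins p g))) \<le> 1" using c1 by simp
      thus ?thesis using g(1) by blast
    next
      case F2: False
      hence "sd (Y \<inter> {p}) Pg = {}" using \<open>p \<notin> Y\<close> unfolding Pg_def sd_def by auto
      hence "card (sd Y (supp (ins p g))) \<le> 1" using c1 s1 by simp
      thus ?thesis using g(1) by blast
    qed
  qed
qed



lemma concat_gray_nth: "k < 2 * length u \<Longrightarrow> concat (map gray u) ! k = gray (u ! (k div 2)) ! (k mod 2)"
proof (induction u arbitrary: k)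
  case Nil thus ?case by simp
next
  case (Cons a u)
  show ?case
  proof (cases "k < 2")
    case True
    thus ?thesis by (simp del: gray.simps add: nth_append gray_len)
  next
    case False
    then obtain k' where k: "k = k' + 2" by (metis add.commute le_Suc_ex not_less)
    hence "k' < 2 * length u" using Cons.prems by simp
    from Cons.IH[OF this] have "concat (map gray u) ! k' = gray (u ! (k' div 2)) ! (k' mod 2)" .
    thus ?thesis using k by (simp del: gray.simps add: nth_append gray_len)
  qed
qed

lemma Gray_nth: "d \<in> Z2Z4_space a b \<Longrightarrow> i < a + 2 * b \<Longrightarrow>
  Gray d ! i = (if i < a then fst d ! i else gray (snd d ! ((i - a) div 2)) ! ((i - a) mod 2))"
  unfolding Gray_def Z2Z4_space_def
  by (auto simp del: gray.simps simp: nth_append concat_gray_nth)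

lemma cshift_nth: "i < length xs \<Longrightarrow> cshift xs ! ((i + 1) mod length xs) = xs ! i"
proof -
  assume i: "i < length xs"
  hence ne: "xs \<noteq> []" by auto
  show ?thesis
  proof (cases "i + 1 = length xs")
    case True
    hence "length xs - 1 = i" by simp
    thus ?thesis using ne True unfolding cshift_def by (simp add: last_conv_nth)
  next
    case False
    hence "(i + 1) mod length xs = Suc i" using i by simp
    thus ?thesis using ne i False unfolding cshift_def by (simp add: nth_butlast)
  qed
qed

lemma cshift_len: "length (cshift xs) = length xs"
  unfolding cshift_def by auto

lemma cshift_set: "set (cshift xs) = set xs"
  unfolding cshift_def by (cases xs rule: rev_cases) auto

lemma sigma_space: "d \<in> Z2Z4_space a b \<Longrightarrow> z2z4_sigma d \<in> Z2Z4_space a b"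
  unfolding Z2Z4_space_def z2z4_sigma_def by (auto simp: cshift_len cshift_set)

lemma sigma_nth:
  assumes d: "d \<in> Z2Z4_space 4 b" and i: "i < 4 + 2 * b"
  shows "pi b i < 4 + 2 * b \<and> Gray (z2z4_sigma d) ! (pi b i) = Gray d ! i"
proof -
  have sd: "z2z4_sigma d \<in> Z2Z4_space 4 b" by (rule sigma_space[OF d])
  have lf: "length (fst d) = 4" "length (snd d) = b" using d unfolding Z2Z4_space_def by auto
  show ?thesis
  proof (cases "i < 4")
    case True
    hence pe: "pi b i = (i + 1) mod 4" unfolding pi_def by simp
    hence "pi b i < 4 + 2 * b" by simp
    moreover have "Gray (z2z4_sigma d) ! (pi b i) = cshift (fst d) ! ((i + 1) mod 4)"
      using Gray_nth[OF sd, of "pi b i"] calculation pe by (simp add: z2z4_sigma_def)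
    moreover have "cshift (fst d) ! ((i + 1) mod 4) = fst d ! i" using cshift_nth[of i "fst d"] lf True by simp
    ultimately show ?thesis using Gray_nth[OF d i] True by simp
  next
    case False
    define q where "q = (i - 4) div 2"
    define r where "r = (i - 4) mod 2"
    have qb: "q < b" using i False unfolding q_def by auto
    have r2: "r < 2" unfolding r_def by simp
    have pe: "pi b i = 4 + 2 * ((q + 1) mod b) + r" unfolding pi_def q_def r_def using False by simp
    have m: "(q + 1) mod b < b" using qb by simp
    have pl: "pi b i < 4 + 2 * b" using pe m r2 by simp
    have e1: "(pi b i - 4) div 2 = (q + 1) mod b" "(pi b i - 4) mod 2 = r" using pe r2 by simp_all
    have "Gray (z2z4_sigma d) ! (pi b i) = gray (cshift (snd d) ! ((q + 1) mod b)) ! r"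
      using Gray_nth[OF sd pl] e1 pe by (simp del: gray.simps add: z2z4_sigma_def)
    also have "cshift (snd d) ! ((q + 1) mod b) = snd d ! q" using cshift_nth[of q "snd d"] lf qb by simp
    finally show ?thesis using Gray_nth[OF d i] False pl unfolding q_def r_def by (simp del: gray.simps)
  qed
qed


definition piinv :: "nat \<Rightarrow> nat \<Rightarrow> nat" where
  "piinv b j = (if j < 4 then (j + 3) mod 4 else 4 + 2 * (((j - 4) div 2 + b - 1) mod b) + (j - 4) mod 2)"

lemma piinv_ok: "b \<in> {2,6} \<Longrightarrow> j < 4 + 2 * b \<Longrightarrow> piinv b j < 4 + 2 * b \<and> pi b (piinv b j) = j"
proof -
  assume b: "b \<in> {2,6}" and j: "j < 4 + 2 * b"
  show ?thesis
  proof (cases "b = 2")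
    case True
    hence "j < 8" using j by simp
    from lt8[OF this] show ?thesis using True by (elim disjE) (simp_all add: pi_def piinv_def)
  next
    case False
    hence b6: "b = 6" using b by simp
    hence "j < 16" using j by simp
    from lt16[OF this] show ?thesis using b6 by (elim disjE) (simp_all add: pi_def piinv_def)
  qed
qed

lemma sigma_supp:
  assumes d: "d \<in> Z2Z4_space 4 b" and b: "b \<in> {2,6}"
  shows "supp (Gray (z2z4_sigma d)) = pi b ` supp (Gray d)"
proof -
  have l1: "length (Gray d) = 4 + 2 * b" using len_Gray[OF d] .
  have l2: "length (Gray (z2z4_sigma d)) = 4 + 2 * b" using len_Gray[OF sigma_space[OF d]] .
  show ?thesis
  proof (rule set_eqI)
    fix j
    show "j \<in> supp (Gray (z2z4_sigma d)) \<longleftrightarrow> j \<in> pi b ` supp (Gray d)"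
    proof
      assume "j \<in> supp (Gray (z2z4_sigma d))"
      hence j: "j < 4 + 2 * b" "Gray (z2z4_sigma d) ! j \<noteq> 0" using l2 by (auto simp: supp_mem)
      define i where "i = piinv b j"
      have i: "i < 4 + 2 * b" "pi b i = j" using piinv_ok[OF b j(1)] unfolding i_def by auto
      have "Gray d ! i \<noteq> 0" using sigma_nth[OF d i(1)] i(2) j(2) by simp
      hence "i \<in> supp (Gray d)" using i(1) l1 by (simp add: supp_mem)
      thus "j \<in> pi b ` supp (Gray d)" using i(2) by blast
    next
      assume "j \<in> pi b ` supp (Gray d)"
      then obtain i where i: "i \<in> supp (Gray d)" "j = pi b i" by blast
      have i2: "i < 4 + 2 * b" "Gray d ! i \<noteq> 0" using i(1) l1 by (auto simp: supp_mem)
      thus "j \<in> supp (Gray (z2z4_sigma d))" using sigma_nth[OF d i2(1)] i(2) l2 by (simp add: supp_mem)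
    qed
  qed
qed


lemma supp_zero: "supp (Gray (z2z4_zero a b)) = {}"
proof -
  have "set (Gray (z2z4_zero a b)) \<subseteq> {0}" unfolding Gray_def z2z4_zero_def by auto
  thus ?thesis unfolding supp_def by (auto dest: nth_mem)
qed

lemma main_S:
  assumes b: "b \<in> {2,6}"
  and add: "Z2Z4_additive 3 b C"
  and perf: "Z2Z4_one_perfect 3 b C"
  and p: "p \<le> 3"
  and cyc: "Z2Z4_cyclic (extend_at p ` C)"
  and fin: "\<And>S. \<lbrakk>\<And>A. A\<in>S \<Longrightarrow> A \<subseteq> {..<4 + 2 * b}; {} \<in> S;
     \<And>A B. A\<in>S \<Longrightarrow> B\<in>S \<Longrightarrow> A\<noteq>B \<Longrightarrow> 3 \<le> card (sd A B);
     \<And>A. A\<in>S \<Longrightarrow> even (card A);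
     \<And>Y. Y \<subseteq> {..<4 + 2 * b} \<Longrightarrow> odd (card Y) \<Longrightarrow> \<exists>A\<in>S. card (sd Y A) \<le> 1;
     \<And>A. A\<in>S \<Longrightarrow> pi b ` A \<in> S\<rbrakk> \<Longrightarrow> False"
  shows False
proof -
  define n where "n = 3 + 2 * b"
  have P: "one_perfect n (Gray ` C)" using perf unfolding Z2Z4_one_perfect_def n_def .
  have Csp: "C \<subseteq> Z2Z4_space 3 b" and z: "z2z4_zero 3 b \<in> C" using add unfolding Z2Z4_additive_def by auto
  have lenG: "\<And>c. c \<in> C \<Longrightarrow> length (Gray c) = n" using len_Gray Csp unfolding n_def by blast
  have pG: "\<And>c. c \<in> C \<Longrightarrow> p \<le> length (Gray c)" using lenG p unfolding n_def by simp
  define S where "S = supp ` Gray ` extend_at p ` C"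
  have Sform: "S = (\<lambda>g. supp (ins p g)) ` Gray ` C"
    unfolding S_def image_image using ext_Gray Csp p by (auto intro!: image_cong)
  show False
  proof (rule fin[of S])
    fix A assume "A \<in> S"
    then obtain c where c: "c \<in> C" "A = supp (ins p (Gray c))" using Sform by auto
    thus "A \<subseteq> {..<4 + 2 * b}" using supp_sub[of "ins p (Gray c)"] len_ins[OF pG[OF c(1)]] lenG[OF c(1)]
      unfolding n_def by simp
  next
    have "supp (ins p (Gray (z2z4_zero 3 b))) = {}"
      using supp_zero[of 3 b] supp_ins[OF pG[OF z]] by simp
    moreover have "Gray (extend_at p (z2z4_zero 3 b)) = ins p (Gray (z2z4_zero 3 b))"
      using ext_Gray[OF _ p] Csp z by blast
    ultimately have "supp (Gray (extend_at p (z2z4_zero 3 b))) = {}" by simp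
    thus "{} \<in> S" unfolding S_def using z by (metis image_eqI)
  next
    fix A B assume "A \<in> S" "B \<in> S" "A \<noteq> B"
    then obtain c d where c: "c \<in> C" "A = supp (ins p (Gray c))" and d: "d \<in> C" "B = supp (ins p (Gray d))"
      using Sform by auto
    have "Gray c \<noteq> Gray d" using c d \<open>A \<noteq> B\<close> by auto
    hence "3 \<le> card (sd (supp (Gray c)) (supp (Gray d)))" using perf_dist[OF P] c(1) d(1) by blast
    thus "3 \<le> card (sd A B)" using dist_ins[OF pG[OF c(1)] pG[OF d(1)]] c(2) d(2) by simp
  next
    fix A assume "A \<in> S"
    then obtain c where c: "c \<in> C" "A = supp (ins p (Gray c))" using Sform by auto
    thus "even (card A)" using even_ins[OF pG[OF c(1)]] by simp
  next
    fix Y :: "nat set" assume Y: "Y \<subseteq> {..<4 + 2 * b}" "odd (card Y)"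
    hence Y': "Y \<subseteq> {..<Suc n}" unfolding n_def by simp
    obtain g where g: "g \<in> Gray ` C" "card (sd Y (supp (ins p g))) \<le> 1"
    proof -
      have "p \<le> n" using p unfolding n_def by simp
      from cover_ins[OF P this Y' Y(2)] show ?thesis using that by blast
    qed
    thus "\<exists>A\<in>S. card (sd Y A) \<le> 1" unfolding Sform by blast
  next
    fix A assume "A \<in> S"
    then obtain c where c: "c \<in> C" "A = supp (Gray (extend_at p c))" unfolding S_def by auto
    have dsp: "extend_at p c \<in> Z2Z4_space 4 b" using ext_space Csp c(1) by blast
    have "z2z4_sigma (extend_at p c) \<in> extend_at p ` C" using cyc c(1) unfolding Z2Z4_cyclic_def by blast
    hence "supp (Gray (z2z4_sigma (extend_at p c))) \<in> S" unfolding S_def by blast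
    thus "pi b ` A \<in> S" using sigma_supp[OF dsp b] c(2) by simp
  qed
qed


theorem lemma4p1:
  fixes r t p :: nat and C :: "z2z4vec set"
  assumes "(r, t) \<in> {(2, 3), (2, 4)}"
    and "Z2Z4_additive (2 ^ r - 1) (2 ^ (t - 1) - 2 ^ (r - 1)) C"
    and "Z2Z4_one_perfect (2 ^ r - 1) (2 ^ (t - 1) - 2 ^ (r - 1)) C"
    and "p \<le> 2 ^ r - 1"
  shows "\<not> Z2Z4_cyclic (extend_at p ` C)"
proof
  assume cyc: "Z2Z4_cyclic (extend_at p ` C)"
  define b where "b = (2::nat) ^ (t - 1) - 2 ^ (r - 1)"
  have a3: "(2::nat) ^ r - 1 = 3" using assms(1) by auto
  have bb: "b \<in> {2,6}" using assms(1) unfolding b_def by auto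
  have add: "Z2Z4_additive 3 b C" using assms(2) a3 unfolding b_def by simp
  have perf: "Z2Z4_one_perfect 3 b C" using assms(3) a3 unfolding b_def by simp
  have p: "p \<le> 3" using assms(4) a3 by simp
  show False
  proof (rule main_S[OF bb add perf p cyc])
    fix S
    assume sub: "\<And>A. A\<in>S \<Longrightarrow> A \<subseteq> {..<4 + 2 * b}" and emp: "{} \<in> S"
     and dist: "\<And>A B. A\<in>S \<Longrightarrow> B\<in>S \<Longrightarrow> A\<noteq>B \<Longrightarrow> 3 \<le> card (sd A B)"
     and even: "\<And>A. A\<in>S \<Longrightarrow> even (card A)"
     and cover: "\<And>Y. Y \<subseteq> {..<4 + 2 * b} \<Longrightarrow> odd (card Y) \<Longrightarrow> \<exists>A\<in>S. card (sd Y A) \<le> 1"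
     and rot: "\<And>A. A\<in>S \<Longrightarrow> pi b ` A \<in> S"
    show False
    proof (cases "b = 2")
      case True
      show False
        by (rule final2[of S]) (use sub emp dist even cover rot True in simp_all)
    next
      case False
      hence b6: "b = 6" using bb by simp
      show False
        by (rule final6[of S]) (use sub emp dist even cover rot b6 in simp_all)
    qed
  qed
qed

end
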